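(* Let $a_1>0$ and $a_1^2+4a_2<0$, and let $X$ be the AR(2)-process with these coefficients. Assume $\mathbb{P}(Y_1>0)>0$. Then there exists $\lambda>0$ such that $\mathbb{P}(\sup_{n=1,\dots,N}X_n\le0)\precsim\exp(-\lambda N)$ as $N\to\infty$.
   Context: Let $(Y_n)_{n\ge1}$ be i.i.d. nondegenerate real random variables. The AR(2)-process is $X_n=a_1X_{n-1}+a_2X_{n-2}+Y_n$ for $n\ge1$ with $X_n=0$ for $n\le0$. $f\precsim g$ means $\limsup_{N\to\infty} f(N)/g(N)<\infty$. *)

theory Defs
  imports "HOL-Probability.Probability" "HOL-Library.Landau_Symbols"
begin

text \<open>AR(2) recursion X_n = a1 X_(n-1) + a2 X_(n-2) + Y_n for n >= 1, with X_n = 0 for n <= 0.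
  Index 0 stands for X_0 = 0; X_(-1) = 0 is used in X_1 = Y_1.\<close>
fun ar2 :: "real \<Rightarrow> real \<Rightarrow> (nat \<Rightarrow> real) \<Rightarrow> nat \<Rightarrow> real" where
  "ar2 a1 a2 y 0 = 0"
| "ar2 a1 a2 y (Suc 0) = y 1"
| "ar2 a1 a2 y (Suc (Suc n)) = a1 * ar2 a1 a2 y (Suc n) + a2 * ar2 a1 a2 y n + y (Suc (Suc n))"

end

theory Submission
  imports Defs
begin

lemma det_step:
  fixes x y :: "nat \<Rightarrow> real" and a1 a2 d :: real
  assumes a1: "a1 > 0" and a2: "a2 < 0" and d: "d > 0"
    and dc: "\<And>c. 0 < c \<Longrightarrow> c \<le> a1 \<Longrightarrow> a1 + a2 / c \<le> c - d"
    and rec: "\<And>n. x (Suc (Suc n)) = a1 * x (Suc n) + a2 * x n + y (Suc (Suc n))"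
  shows "(\<forall>i\<le>j+2. x (m+i) \<le> 0) \<longrightarrow> (\<forall>i\<le>j. y (m+i+2) > 0) \<longrightarrow> x (m+j+2) > (a1 - j*d) * x (m+j+1)"
proof (induction j)
  case 0
  show ?case
  proof (intro impI)
    assume h1: "\<forall>i\<le>0+2. x (m+i) \<le> 0" and h2: "\<forall>i\<le>0. y (m+i+2) > 0"
    have "x m \<le> 0" using h1[rule_format, of 0] by simp
    moreover have "y (m+2) > 0" using h2 by auto
    moreover have "x (m+2) = a1 * x (m+1) + a2 * x m + y (m+2)" using rec[of m] by simp
    ultimately show "x (m+0+2) > (a1 - real 0*d) * x (m+0+1)" using a2 mult_nonpos_nonpos[of a2 "x m"] by simp
  qed
next
  case (Suc j)
  show ?case
  proof (intro impI)
    assume h1: "\<forall>i\<le>Suc j+2. x (m+i) \<le> 0" and h2: "\<forall>i\<le>Suc j. y (m+i+2) > 0"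
    have IH: "x (m+j+2) > (a1 - j*d) * x (m+j+1)" using Suc h1 h2 by auto
    define c where "c = a1 - j*d"
    define u where "u = x (m+j+1)"
    define v where "v = x (m+j+2)"
    have u0: "u \<le> 0" using h1[rule_format, of "j+1"] by (simp add: u_def add.assoc)
    have v0: "v \<le> 0" using h1[rule_format, of "j+2"] by (simp add: v_def add.assoc)
    have yp: "y (m+Suc j+2) > 0" using h2[rule_format, of "Suc j"] by simp
    have w: "x (m+Suc j+2) = a1 * v + a2 * u + y (m+Suc j+2)" using rec[of "m+j+1"] 
      by (simp add: u_def v_def add.assoc eval_nat_numeral)
    have vc: "v > c * u" using IH by (simp add: c_def u_def v_def)
    have cpos: "c > 0"
    proof (rule ccontr)
      assume "\<not> c > 0"
      then have "c * u \<ge> 0" using u0 by (simp add: mult_nonpos_nonpos)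
      then show False using vc v0 by linarith
    qed
    have cle: "c \<le> a1" using d by (simp add: c_def)
    have "u < v / c" using vc cpos by (simp add: field_simps)
    then have "a2 * u > a2 * (v / c)" using a2 by (metis mult_less_cancel_left_neg)
    then have "x (m+Suc j+2) > (a1 + a2 / c) * v" using w yp by (simp add: algebra_simps)
    moreover have "(a1 + a2 / c) * v \<ge> (c - d) * v" using dc[OF cpos cle] v0 by (simp add: mult_right_mono_neg)
    ultimately have "x (m+Suc j+2) > (c - d) * v" by linarith
    moreover have "x (m + Suc j + 1) = v" by (simp add: v_def)
    ultimately show "x (m + Suc j + 2) > (a1 - real (Suc j) * d) * x (m + Suc j + 1)"
      by (simp add: c_def algebra_simps)
  qed
qed

lemma det_block:
  fixes a1 a2 :: real
  assumes a1: "a1 > 0" and disc: "a1\<^sup>2 + 4 * a2 < 0"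
  shows "\<exists>Kc::nat. \<forall>(x::nat\<Rightarrow>real) y m. (\<forall>n. x (Suc (Suc n)) = a1 * x (Suc n) + a2 * x n + y (Suc (Suc n)))
      \<longrightarrow> (\<forall>i\<le>Kc+2. x (m+i) \<le> 0) \<longrightarrow> (\<forall>i\<le>Kc. y (m+i+2) > 0) \<longrightarrow> False"
proof -
  define D where "D = -(a1\<^sup>2 + 4 * a2) / 4"
  define d where "d = D / a1"
  have D: "D > 0" using disc by (simp add: D_def)
  have d: "d > 0" using D a1 by (simp add: d_def)
  have a2: "a2 < 0" using disc by (smt (verit) zero_le_power2)
  have dc: "a1 + a2 / c \<le> c - d" if c: "0 < c" "c \<le> a1" for c
  proof -
    have "c\<^sup>2 - a1*c - a2 \<ge> D" unfolding D_def
      using zero_le_power2[of "c - a1/2"] unfolding power2_eq_square by (simp add: field_simps)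
    moreover have "d * c \<le> D" using c d a1 by (simp add: d_def field_simps)
    ultimately have "a1 * c + a2 \<le> (c - d) * c" by (simp add: power2_eq_square algebra_simps)
    then show ?thesis using c by (simp add: field_simps)
  qed
  define Kc where "Kc = nat \<lceil>a1 / d\<rceil>"
  have Kc: "a1 - real Kc * d \<le> 0"
  proof -
    have "real Kc \<ge> a1 / d" unfolding Kc_def by linarith
    then have "real Kc * d \<ge> a1" using d by (simp add: field_simps)
    then show ?thesis by simp
  qed
  show ?thesis
  proof (intro exI allI impI)
    fix x y :: "nat \<Rightarrow> real" and m
    assume rec: "\<forall>n. x (Suc (Suc n)) = a1 * x (Suc n) + a2 * x n + y (Suc (Suc n))"
      and h1: "\<forall>i\<le>Kc+2. x (m+i) \<le> 0" and h2: "\<forall>i\<le>Kc. y (m+i+2) > 0"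
    have "x (m+Kc+2) > (a1 - real Kc * d) * x (m+Kc+1)"
      using det_step[OF a1 a2 d dc, of x y Kc m] rec h1 h2 by blast
    moreover have "(a1 - real Kc * d) * x (m+Kc+1) \<ge> 0"
      using Kc h1[rule_format, of "Kc+1"] by (simp add: mult_nonpos_nonpos add.assoc)
    moreover have "x (m+Kc+2) \<le> 0" using h1[rule_format, of "Kc+2"] by (simp add: add.assoc)
    ultimately show False by linarith
  qed
qed

lemma ar2_rec: "ar2 a1 a2 y (Suc (Suc n)) = a1 * ar2 a1 a2 y (Suc n) + a2 * ar2 a1 a2 y n + y (Suc (Suc n))"
  by simp

theorem mainTheorem12:
  fixes M :: "'a measure" and Y :: "nat \<Rightarrow> 'a \<Rightarrow> real" and a1 a2 :: real
  assumes "prob_space M"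
    and meas: "\<And>n. Y n \<in> borel_measurable M"
    and indep: "prob_space.indep_vars M (\<lambda>_. borel) Y {1..}"
    and ident: "\<And>n. n \<ge> 1 \<Longrightarrow> distr M borel (Y n) = distr M borel (Y 1)"
    and nondeg: "\<not> (\<exists>c. AE \<omega> in M. Y 1 \<omega> = c)"
    and "a1 > 0" and "a1\<^sup>2 + 4 * a2 < 0"
    and pos: "measure M {\<omega> \<in> space M. Y 1 \<omega> > 0} > 0"
  shows "\<exists>l>0. (\<lambda>N. measure M {\<omega> \<in> space M. \<forall>n\<in>{1..N}. ar2 a1 a2 (\<lambda>k. Y k \<omega>) n \<le> 0})
             \<in> O(\<lambda>N. exp (- l * real N))"
proof -
  interpret prob_space M by fact
  obtain Kc :: nat where Kc: "\<And>(x::nat\<Rightarrow>real) y m. (\<forall>n. x (Suc (Suc n)) = a1 * x (Suc n) + a2 * x n + y (Suc (Suc n)))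
      \<Longrightarrow> (\<forall>i\<le>Kc+2. x (m+i) \<le> 0) \<Longrightarrow> (\<forall>i\<le>Kc. y (m+i+2) > 0) \<Longrightarrow> False"
    using det_block[OF assms(6,7)] by blast
  define L where "L = Kc + 1"
  have L: "L \<ge> 1" by (simp add: L_def)
  define b where "b = (\<lambda>j. {\<omega>\<in>space M. Y j \<omega> > 0})"
  define p where "p = prob (b 1)"
  have bev: "b j \<in> events" for j unfolding b_def using meas by measurable
  have evs: "indep_events b {1..}"
    unfolding b_def by (rule indep_eventsI_indep_vars[OF indep]) simp
  have pj: "prob (b j) = p" if "j \<ge> 1" for j
  proof -
    have "prob (b j) = measure (distr M borel (Y j)) {0<..}"
      using meas by (subst measure_distr) (auto simp: b_def vimage_def Int_def conj_commute)
    also have "\<dots> = measure (distr M borel (Y 1)) {0<..}" using ident[OF that] by simp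
    also have "\<dots> = p"
      using meas by (subst measure_distr) (auto simp: p_def b_def vimage_def Int_def conj_commute)
    finally show ?thesis .
  qed
  have p0: "p > 0" using pos by (simp add: p_def b_def)
  have p1: "p \<le> 1" by (simp add: p_def)
  define K where "K = (\<lambda>i::nat. {i*L+2..i*L+L+1})"
  have Kne: "K i \<noteq> {}" "finite (K i)" "card (K i) = L" for i using L by (auto simp: K_def)
  have Ksub: "K i \<subseteq> {1..}" for i by (auto simp: K_def)
  define q where "q = p ^ L"
  have blockp: "prob (\<Inter>j\<in>K i. b j) = q" for i
  proof -
    have "prob (\<Inter>j\<in>K i. b j) = (\<Prod>j\<in>K i. prob (b j))"
      using evs Kne[of i] Ksub[of i] unfolding indep_events_def by blast
    also have "\<dots> = (\<Prod>j\<in>K i. p)" by (intro prod.cong refl pj) (auto simp: K_def)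
    finally show ?thesis using Kne[of i] by (simp add: q_def)
  qed
  have disj: "disjoint_family_on K UNIV"
    unfolding disjoint_family_on_def
  proof (intro ballI impI)
    fix i i' :: nat assume "i \<noteq> i'"
    then consider "i < i'" | "i' < i" by linarith
    then show "K i \<inter> K i' = {}"
    proof cases
      case 1
      then have "(i+1)*L \<le> i'*L" by (intro mult_le_mono1) simp
      then show ?thesis by (auto simp: K_def)
    next
      case 2
      then have "(i'+1)*L \<le> i*L" by (intro mult_le_mono1) simp
      then show ?thesis by (auto simp: K_def)
    qed
  qed
  have gi: "indep_vars (\<lambda>i. PiM (K i) (\<lambda>_. borel)) (\<lambda>i \<omega>. restrict (\<lambda>j. Y j \<omega>) (K i)) UNIV"
    by (rule indep_vars_restrict[OF indep Ksub disj])
  define A where "A = (\<lambda>i. space M - (\<Inter>j\<in>K i. b j))"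
  have evA: "indep_events A UNIV"
  proof -
    have "indep_events (\<lambda>i. {\<omega>\<in>space M. \<not>(\<forall>j\<in>K i. 0 < restrict (\<lambda>j. Y j \<omega>) (K i) j)}) UNIV"
    proof (rule indep_eventsI_indep_vars[OF gi])
      fix i
      have "finite (K i)" by (rule Kne)
      then show "{v \<in> space (PiM (K i) (\<lambda>_. borel)). \<not>(\<forall>j\<in>K i. (0::real) < v j)} \<in> sets (PiM (K i) (\<lambda>_. borel))"
        by measurable
    qed
    moreover have "(\<lambda>i. {\<omega>\<in>space M. \<not>(\<forall>j\<in>K i. 0 < restrict (\<lambda>j. Y j \<omega>) (K i) j)}) = A"
      using Kne(1) by (auto simp: A_def b_def fun_eq_iff)
    ultimately show ?thesis by simp
  qed
  have probA: "prob (A i) = 1 - q" for i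
    unfolding A_def using blockp[of i] Kne[of i] bev
    by (subst prob_compl) (auto intro!: sets.countable_INT')
  define E where "E = (\<lambda>N. {\<omega> \<in> space M. \<forall>n\<in>{1..N}. ar2 a1 a2 (\<lambda>k. Y k \<omega>) n \<le> 0})"
  have Aev: "A i \<in> events" for i using evA unfolding indep_events_def by auto
  have bound: "prob (E N) \<le> (1-q)^((N-1) div L)" for N
  proof (cases "(N-1) div L = 0")
    case True
    then show ?thesis by simp
  next
    case False
    define B where "B = (N-1) div L"
    have BL: "B * L \<le> N - 1" unfolding B_def by (rule div_times_less_eq_dividend)
    have sub: "E N \<subseteq> (\<Inter>i\<in>{..<B}. A i)"
    proof
      fix \<omega> assume "\<omega> \<in> E N"
      then have om: "\<omega> \<in> space M" and xn: "\<And>n. n \<in> {1..N} \<Longrightarrow> ar2 a1 a2 (\<lambda>k. Y k \<omega>) n \<le> 0"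
        by (auto simp: E_def)
      show "\<omega> \<in> (\<Inter>i\<in>{..<B}. A i)"
      proof (rule INT_I)
        fix i assume "i \<in> {..<B}"
        then have "(i+1)*L \<le> B*L" by (intro mult_le_mono1) simp
        then have h: "i*L + L \<le> B*L" by simp
        have "1 \<le> B*L" using False L by (simp add: B_def)
        then have iN: "i*L + L + 1 \<le> N" using BL h by linarith
        show "\<omega> \<in> A i"
        proof (rule ccontr)
          assume "\<omega> \<notin> A i"
          then have yb: "\<forall>j\<in>K i. Y j \<omega> > 0" using om by (auto simp: A_def b_def)
          show False
          proof (rule Kc[of "ar2 a1 a2 (\<lambda>k. Y k \<omega>)" "\<lambda>k. Y k \<omega>" "i*L"])
            show "\<forall>n. ar2 a1 a2 (\<lambda>k. Y k \<omega>) (Suc (Suc n)) = a1 * ar2 a1 a2 (\<lambda>k. Y k \<omega>) (Suc n) + a2 * ar2 a1 a2 (\<lambda>k. Y k \<omega>) n + Y (Suc (Suc n)) \<omega>"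
              by simp
            show "\<forall>i'\<le>Kc+2. ar2 a1 a2 (\<lambda>k. Y k \<omega>) (i*L+i') \<le> 0"
            proof (intro allI impI)
              fix i' assume "i' \<le> Kc + 2"
              then have "i*L+i' \<le> N" using iN by (simp add: L_def)
              then show "ar2 a1 a2 (\<lambda>k. Y k \<omega>) (i*L+i') \<le> 0"
                using xn[of "i*L+i'"] by (cases "i*L+i' = 0") auto
            qed
            show "\<forall>i'\<le>Kc. Y (i*L+i'+2) \<omega> > 0"
              using yb by (auto simp: K_def L_def)
          qed
        qed
      qed
    qed
    have "prob (E N) \<le> prob (\<Inter>i\<in>{..<B}. A i)"
      using sub Aev False by (intro finite_measure_mono) (auto simp: B_def)
    also have "\<dots> = (\<Prod>i\<in>{..<B}. prob (A i))"
    proof -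
      have "{..<B} \<noteq> {}" using False by (auto simp: B_def)
      then show ?thesis using evA unfolding indep_events_def by blast
    qed
    also have "\<dots> = (1-q)^B" by (simp add: probA)
    finally show ?thesis by (simp add: B_def)
  qed
  have q0: "q > 0" using p0 by (simp add: q_def)
  have q1: "q \<le> 1" using p0 p1 by (simp add: q_def power_le_one)
  define r where "r = max (1-q) (1/2)"
  have r0: "r > 0" and r1: "r < 1" using q0 by (auto simp: r_def)
  define l where "l = - ln r / real L"
  have lnr: "ln r < 0" using r0 r1 by simp
  have l0: "l > 0" using lnr L by (simp add: l_def divide_less_0_iff)
  show ?thesis
  proof (intro exI conjI)
    show "l > 0" by (rule l0)
    show "(\<lambda>N. measure M {\<omega> \<in> space M. \<forall>n\<in>{1..N}. ar2 a1 a2 (\<lambda>k. Y k \<omega>) n \<le> 0})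
             \<in> O(\<lambda>N. exp (- l * real N))"
    proof (rule bigoI[where c = "exp (- ln r)"], rule always_eventually, rule allI)
      fix N :: nat
      define B where "B = (N-1) div L"
      have "N - 1 = B * L + (N-1) mod L" by (simp add: B_def)
      moreover have "(N-1) mod L < L" using L by simp
      ultimately have "N \<le> B * L + L" by linarith
      then have "real N \<le> real B * real L + real L" by (metis of_nat_add of_nat_le_iff of_nat_mult)
      then have BN: "real B \<ge> real N / real L - 1" using L by (simp add: field_simps)
      have "prob (E N) \<le> (1-q)^B" using bound[of N] by (simp add: B_def)
      also have "\<dots> \<le> r^B" using q1 by (intro power_mono) (auto simp: r_def)
      also have "\<dots> = exp (real B * ln r)" using r0 by (simp add: exp_of_nat_mult)
      also have "\<dots> \<le> exp ((real N / real L - 1) * ln r)"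
        using BN lnr by (intro exp_mono mult_right_mono_neg) auto
      also have "\<dots> = exp (- ln r) * exp (- l * real N)"
        using L by (simp add: l_def field_simps flip: exp_add)
      finally have "prob (E N) \<le> exp (- ln r) * exp (- l * real N)" .
      then show "norm (prob {\<omega> \<in> space M. \<forall>n\<in>{1..N}. ar2 a1 a2 (\<lambda>k. Y k \<omega>) n \<le> 0}) \<le> exp (- ln r) * norm (exp (- l * real N))"
        by (simp add: E_def)
    qed
  qed
qed

end
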